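(* Fix weights $w_1,\dots,w_D>0$. For $n,N\ge 1$ let $Z_{n,N}(w_1,\dots,w_D)=\sum_{\tau}\prod_{e\in\tau}w(e)$, the sum over all perfect matchings $\tau$ of the $N$-fold blow-up $\mathbb T(n,\Lambda)_N$ of the torus $\mathbb T(n,\Lambda)$, where every lift of an edge of type $e_i$ has weight $w_i$. Then $$\lim_{n\to\infty}\lim_{N\to\infty}\frac{1}{Nn^d}\log\frac{Z_{n,N}(w_1,\dots,w_D)}{(N!)^{n^d}}=\log(w_1+\dots+w_D).$$
   Context: $\Lambda$ is a bipartite graph embedded in $\mathbb R^d$ of the following form (or a linear image of one): there are vectors $e_1,\dots,e_D\in\mathbb R^d$ spanning $\mathbb R^d$ with $\sum_{i=1}^D e_i=0$ and a vector $v_0$ with $e_i\in v_0+\mathbb Z^d$ for all $i$; the white vertices are $W=\mathbb Z^d$, the black vertices are $B=\mathbb Z^d+v_0$, and each white vertex $w$ is joined by an edge exactly to the black vertices $w+e_1,\dots,w+e_D$; $\Lambda$ is connected. An edge from $w$ to $w+e_i$ is said to be of type $e_i$. The torus $\mathbb T(n,\Lambda)=\Lambda/n\mathbb Z^d$ has $n^d$ white and $n^d$ black vertices and every vertex has degree $D$. The $N$-fold blow-up $G_N$ of a graph $G$ replaces every vertex by $N$ copies (lifts) and every edge $(u,v)$ by the complete bipartite graph between the lifts of $u$ and the lifts of $v$. *)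

theory Defs
  imports "HOL-Analysis.Analysis"
begin

definition Zd :: "(real^'d) set" where
  "Zd = {x. \<forall>k. x $ k \<in> \<int>}"

text \<open>The infinite bipartite graph Lambda: white vertices Inl w (w in Z^d),
  black vertices Inr b (b in Z^d + v0); white w adjacent to black w + e i, i < D.\<close>
definition lattice_vertices :: "real^'d \<Rightarrow> (real^'d + real^'d) set" where
  "lattice_vertices v0 = Inl ` Zd \<union> Inr ` ((\<lambda>z. z + v0) ` Zd)"

definition lattice_adj ::
  "nat \<Rightarrow> (nat \<Rightarrow> real^'d) \<Rightarrow> ((real^'d + real^'d) \<times> (real^'d + real^'d)) set" where
  "lattice_adj D e =
     {(Inl w, Inr b) | w b. w \<in> Zd \<and> (\<exists>i<D. b = w + e i)} \<union>
     {(Inr b, Inl w) | w b. w \<in> Zd \<and> (\<exists>i<D. b = w + e i)}"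

definition lattice_connected :: "nat \<Rightarrow> (nat \<Rightarrow> real^'d) \<Rightarrow> real^'d \<Rightarrow> bool" where
  "lattice_connected D e v0 =
     (\<forall>x\<in>lattice_vertices v0. \<forall>y\<in>lattice_vertices v0. (x, y) \<in> (lattice_adj D e)\<^sup>*)"

text \<open>Torus T(n,Lambda): white vertices = representatives of Z^d / nZ^d; black vertices
  v0 + z likewise represented by z in the same set of representatives.\<close>
definition torus_reps :: "nat \<Rightarrow> (int^'d) set" where
  "torus_reps n = {w. \<forall>k. 0 \<le> w $ k \<and> w $ k < int n}"

text \<open>Black endpoint (as representative z, meaning the class of v0 + z) of the type-i edge at white w.\<close>
definition torus_target :: "nat \<Rightarrow> (nat \<Rightarrow> real^'d) \<Rightarrow> real^'d \<Rightarrow> int^'d \<Rightarrow> nat \<Rightarrow> int^'d" where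
  "torus_target n e v0 w i = (\<chi> k. (w $ k + \<lfloor>(e i - v0) $ k\<rfloor>) mod int n)"

text \<open>Edges of the N-fold blow-up of the torus: (w, i, k, l) is the edge between
  the k-th lift of white w and the l-th lift of black torus_target w i, lifting the type-i edge at w.\<close>
definition blowup_edges :: "nat \<Rightarrow> nat \<Rightarrow> nat \<Rightarrow> ((int^'d) \<times> nat \<times> nat \<times> nat) set" where
  "blowup_edges D n N = {(w, i, k, l). w \<in> torus_reps n \<and> i < D \<and> k < N \<and> l < N}"

definition perfect_matchings ::
  "nat \<Rightarrow> (nat \<Rightarrow> real^'d) \<Rightarrow> real^'d \<Rightarrow> nat \<Rightarrow> nat \<Rightarrow> ((int^'d) \<times> nat \<times> nat \<times> nat) set set" where
  "perfect_matchings D e v0 n N =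
     {M. M \<subseteq> blowup_edges D n N \<and>
        (\<forall>w\<in>torus_reps n. \<forall>k<N. \<exists>!x. x \<in> M \<and> fst x = w \<and> fst (snd (snd x)) = k) \<and>
        (\<forall>b\<in>torus_reps n. \<forall>l<N. \<exists>!x. x \<in> M \<and>
            torus_target n e v0 (fst x) (fst (snd x)) = b \<and> snd (snd (snd x)) = l)}"

definition Z_part ::
  "nat \<Rightarrow> (nat \<Rightarrow> real^'d) \<Rightarrow> real^'d \<Rightarrow> (nat \<Rightarrow> real) \<Rightarrow> nat \<Rightarrow> nat \<Rightarrow> real" where
  "Z_part D e v0 wt n N =
     (\<Sum>M\<in>perfect_matchings D e v0 n N. \<Prod>x\<in>M. wt (fst (snd x)))"

end

theory Submission
  imports Defs "HOL-Library.FuncSet" "HOL-Real_Asymp.Real_Asymp"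
begin


lemma card_bij_ext:
  assumes "finite F" "finite Y" "card F = card Y"
  shows "card {g \<in> F \<rightarrow>\<^sub>E Y. bij_betw g F Y} = fact (card F)"
proof -
  have "{g \<in> F \<rightarrow>\<^sub>E Y. bij_betw g F Y} = {g \<in> F \<rightarrow>\<^sub>E Y. inj_on g F}"
  proof (intro Collect_cong conj_cong refl iffI)
    fix g assume "g \<in> F \<rightarrow>\<^sub>E Y" "inj_on g F"
    then have "g ` F \<subseteq> Y" "card (g ` F) = card Y" using assms by (auto simp: card_image)
    then have "g ` F = Y" using assms by (intro card_subset_eq) auto
    then show "bij_betw g F Y" using \<open>inj_on g F\<close> by (simp add: bij_betw_def)
  qed (simp add: bij_betw_def)
  also have "card \<dots> = card Y ^ (card F - card F) * prod ((-) (card Y)) {0..<card F}"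
    using assms by (intro card_inj_on_subset_funcset) auto
  also have "\<dots> = fact (card F)" using assms by (simp add: fact_prod_rev)
  finally show ?thesis .
qed

lemma card_fiber_bij:
  assumes "finite X" "finite B" "\<And>x. x \<in> X \<Longrightarrow> p x \<in> B"
  shows "card {l \<in> X \<rightarrow>\<^sub>E Y. \<forall>b\<in>B. bij_betw l {x\<in>X. p x = b} Y}
       = (\<Prod>b\<in>B. card {g \<in> {x\<in>X. p x = b} \<rightarrow>\<^sub>E Y. bij_betw g {x\<in>X. p x = b} Y})"
proof -
  let ?S = "{l \<in> X \<rightarrow>\<^sub>E Y. \<forall>b\<in>B. bij_betw l {x\<in>X. p x = b} Y}"
  let ?G = "\<lambda>b. {g \<in> {x\<in>X. p x = b} \<rightarrow>\<^sub>E Y. bij_betw g {x\<in>X. p x = b} Y}"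
  let ?f = "\<lambda>l. \<lambda>b\<in>B. restrict l {x\<in>X. p x = b}"
  have "bij_betw ?f ?S (PiE B ?G)"
  proof (rule bij_betwI')
    fix l l' assume l: "l \<in> ?S" and l': "l' \<in> ?S"
    show "(?f l = ?f l') = (l = l')"
    proof
      assume eq: "?f l = ?f l'"
      show "l = l'"
      proof
        fix x
        show "l x = l' x"
        proof (cases "x \<in> X")
          case True
          then have "?f l (p x) x = ?f l' (p x) x" using eq by simp
          then show ?thesis using True assms(3) by simp
        next
          case False then show ?thesis using l l' by (auto simp: PiE_def extensional_def)
        qed
      qed
    qed simp
  next
    fix l assume l: "l \<in> ?S"
    show "?f l \<in> PiE B ?G"
    proof (rule PiE_I)
      fix b assume b: "b \<in> B"
      have "bij_betw l {x\<in>X. p x = b} Y" using l b by auto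
      then have "bij_betw (restrict l {x\<in>X. p x = b}) {x\<in>X. p x = b} Y"
        by (rule bij_betw_cong[THEN iffD1, rotated]) auto
      then show "?f l b \<in> ?G b" using b by (auto simp: bij_betw_def)
    qed simp
  next
    fix G assume G: "G \<in> PiE B ?G"
    define l where "l = (\<lambda>x\<in>X. G (p x) x)"
    have "l \<in> ?S"
    proof -
      have "l \<in> X \<rightarrow>\<^sub>E Y" using G assms(3) by (force simp: l_def PiE_def Pi_def)
      moreover have "bij_betw l {x\<in>X. p x = b} Y" if b: "b \<in> B" for b
      proof -
        have "bij_betw (G b) {x\<in>X. p x = b} Y" using G b by auto
        then show ?thesis by (rule bij_betw_cong[THEN iffD1, rotated]) (auto simp: l_def)
      qed
      ultimately show ?thesis by auto
    qed
    moreover have "G = ?f l"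
    proof
      fix b show "G b = ?f l b"
      proof (cases "b \<in> B")
        case True
        have "G b \<in> extensional {x\<in>X. p x = b}" using G True by (auto simp: PiE_def Pi_def)
        then show ?thesis using True by (auto simp: l_def extensional_def)
      next
        case False then show ?thesis using G by (auto simp: PiE_def extensional_def)
      qed
    qed
    ultimately show "\<exists>l\<in>?S. G = ?f l" by blast
  qed
  then have "card ?S = card (PiE B ?G)" by (rule bij_betw_same_card)
  also have "\<dots> = (\<Prod>b\<in>B. card (?G b))" using assms by (simp add: card_PiE)
  finally show ?thesis .
qed



definition PMa :: "'w set \<Rightarrow> ('w \<Rightarrow> nat \<Rightarrow> 'w) \<Rightarrow> nat \<Rightarrow> nat \<Rightarrow> ('w \<times> nat \<times> nat \<times> nat) set set" where
  "PMa R tgt D N = {M. M \<subseteq> {(w, i, k, l). w \<in> R \<and> i < D \<and> k < N \<and> l < N} \<and>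
        (\<forall>w\<in>R. \<forall>k<N. \<exists>!x. x \<in> M \<and> fst x = w \<and> fst (snd (snd x)) = k) \<and>
        (\<forall>b\<in>R. \<forall>l<N. \<exists>!x. x \<in> M \<and>
            tgt (fst x) (fst (snd x)) = b \<and> snd (snd (snd x)) = l)}"

definition Fset where "Fset R tgt N t b = {x \<in> R \<times> {..<N}. tgt (fst x) (t (fst x) (snd x)) = b}"
definition Lset where "Lset R tgt N t = {l \<in> (R \<times> {..<N}) \<rightarrow>\<^sub>E {..<N}. \<forall>b\<in>R. bij_betw l (Fset R tgt N t b) {..<N}}"
definition Tset :: "'w set \<Rightarrow> nat \<Rightarrow> nat \<Rightarrow> ('w \<Rightarrow> nat \<Rightarrow> nat) set" where
  "Tset R D N = R \<rightarrow>\<^sub>E ({..<N} \<rightarrow>\<^sub>E {..<D})"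
definition Phi where "Phi R N tlp = (\<lambda>(w,k). (w, fst tlp w k, k, snd tlp (w,k))) ` (R \<times> {..<N})"

lemma Phi_bij:
  assumes tgtR: "\<And>w i. w \<in> R \<Longrightarrow> i < D \<Longrightarrow> tgt w i \<in> R"
  shows "bij_betw (Phi R N) (Sigma (Tset R D N) (Lset R tgt N)) (PMa R tgt D N)"
proof (rule bij_betw_imageI)
  show "inj_on (Phi R N) (Sigma (Tset R D N) (Lset R tgt N))"
  proof (rule inj_onI, clarify)
    fix t l t' l'
    assume t: "t \<in> Tset R D N" and l: "l \<in> Lset R tgt N t" and t': "t' \<in> Tset R D N"
      and l': "l' \<in> Lset R tgt N t'" and eq: "Phi R N (t, l) = Phi R N (t', l')"
    have *: "t w k = t' w k \<and> l (w,k) = l' (w,k)" if "w \<in> R" "k < N" for w k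
    proof -
      have "(w, t w k, k, l (w,k)) \<in> Phi R N (t, l)" unfolding Phi_def using that
        by (intro image_eqI[of _ _ "(w,k)"]) auto
      then have "(w, t w k, k, l (w,k)) \<in> Phi R N (t', l')" using eq by simp
      then obtain w' k' where "(w, t w k, k, l (w,k)) = (w', t' w' k', k', l' (w',k'))"
        unfolding Phi_def by auto
      then show ?thesis by (simp only: prod.inject) (elim conjE; hypsubst; simp)
    qed
    show "t = t' \<and> l = l'"
    proof
      show "t = t'"
      proof (intro ext)
        fix w k show "t w k = t' w k"
        proof (cases "w \<in> R")
          case True
          then have "t w \<in> {..<N} \<rightarrow>\<^sub>E {..<D}" "t' w \<in> {..<N} \<rightarrow>\<^sub>E {..<D}"
            using PiE_mem[OF t[unfolded Tset_def]] PiE_mem[OF t'[unfolded Tset_def]] by blast+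
          then have "t w \<in> extensional {..<N}" "t' w \<in> extensional {..<N}" by (simp_all add: PiE_iff)
          then show ?thesis using * True by (cases "k < N") (auto simp: extensional_def)
        next
          case False
          have "t \<in> extensional R" "t' \<in> extensional R" using t t' unfolding Tset_def by (simp_all add: PiE_iff)
          then show ?thesis using False by (simp add: extensional_def)
        qed
      qed
      show "l = l'"
      proof (intro ext)
        fix x
        have "l \<in> extensional (R \<times> {..<N})" "l' \<in> extensional (R \<times> {..<N})"
          using l l' unfolding Lset_def by (simp_all add: PiE_iff)
        then show "l x = l' x"
          using * by (cases x; cases "x \<in> R \<times> {..<N}") (auto simp: extensional_def)
      qed
    qed
  qed
next
  show "Phi R N ` Sigma (Tset R D N) (Lset R tgt N) = PMa R tgt D N"
  proof
    show "Phi R N ` Sigma (Tset R D N) (Lset R tgt N) \<subseteq> PMa R tgt D N"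
    proof clarify
      fix t l assume t: "t \<in> Tset R D N" and l: "l \<in> Lset R tgt N t"
      have lE: "l \<in> (R \<times> {..<N}) \<rightarrow>\<^sub>E {..<N}" and bij0: "\<forall>b\<in>R. bij_betw l (Fset R tgt N t b) {..<N}"
        using l unfolding Lset_def by simp_all
      have tD: "t w k < D" if "w \<in> R" "k < N" for w k
        using PiE_mem[OF PiE_mem[OF t[unfolded Tset_def] that(1)]] that(2) by simp
      have lN: "l (w,k) < N" if "w \<in> R" "k < N" for w k
        using PiE_mem[OF lE, of "(w,k)"] that by simp
      have bij: "bij_betw l (Fset R tgt N t b) {..<N}" if "b \<in> R" for b using bij0 that by blast
      let ?M = "Phi R N (t, l)"
      have sub: "?M \<subseteq> {(w, i, k, l). w \<in> R \<and> i < D \<and> k < N \<and> l < N}"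
        using tD lN by (auto simp: Phi_def)
      have white: "\<forall>w\<in>R. \<forall>k<N. \<exists>!x. x \<in> ?M \<and> fst x = w \<and> fst (snd (snd x)) = k"
      proof (intro ballI allI impI)
        fix w k assume "w \<in> R" "k < N"
        then show "\<exists>!x. x \<in> ?M \<and> fst x = w \<and> fst (snd (snd x)) = k"
          by (intro ex1I[of _ "(w, t w k, k, l (w,k))"]) (auto simp: Phi_def)
      qed
      have black: "\<forall>b\<in>R. \<forall>m<N. \<exists>!x. x \<in> ?M \<and> tgt (fst x) (fst (snd x)) = b \<and> snd (snd (snd x)) = m"
      proof (intro ballI allI impI)
        fix b m assume b: "b \<in> R" and m: "m < N"
        have "m \<in> l ` Fset R tgt N t b" using bij[OF b] m by (simp add: bij_betw_def)
        then obtain y where y: "y \<in> Fset R tgt N t b" "l y = m" by blast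
        obtain w k where yy: "y = (w,k)" by (cases y)
        show "\<exists>!x. x \<in> ?M \<and> tgt (fst x) (fst (snd x)) = b \<and> snd (snd (snd x)) = m"
        proof (rule ex1I[of _ "(w, t w k, k, l (w,k))"])
          show "(w, t w k, k, l (w,k)) \<in> ?M \<and> tgt (fst (w, t w k, k, l (w,k))) (fst (snd (w, t w k, k, l (w,k)))) = b \<and> snd (snd (snd (w, t w k, k, l (w,k)))) = m"
            using y yy by (auto simp: Phi_def Fset_def)
        next
          fix x assume x: "x \<in> ?M \<and> tgt (fst x) (fst (snd x)) = b \<and> snd (snd (snd x)) = m"
          then obtain w' k' where x': "x = (w', t w' k', k', l (w',k'))" "w' \<in> R" "k' < N"
            by (auto simp: Phi_def)
          have "(w',k') \<in> Fset R tgt N t b" using x x' by (auto simp: Fset_def)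
          moreover have "l (w',k') = l (w,k)" using x x' y yy by auto
          ultimately have "(w',k') = (w,k)" using bij[OF b] y yy unfolding bij_betw_def inj_on_def by blast
          then show "x = (w, t w k, k, l (w,k))" using x' by auto
        qed
      qed
      show "?M \<in> PMa R tgt D N" unfolding PMa_def using sub white black by (intro CollectI conjI)
    qed
  next
    show "PMa R tgt D N \<subseteq> Phi R N ` Sigma (Tset R D N) (Lset R tgt N)"
    proof
      fix M assume M: "M \<in> PMa R tgt D N"
      have sub: "M \<subseteq> {(w, i, k, l). w \<in> R \<and> i < D \<and> k < N \<and> l < N}" using M by (simp add: PMa_def)
      have white: "\<And>w k. w \<in> R \<Longrightarrow> k < N \<Longrightarrow> \<exists>!x. x \<in> M \<and> fst x = w \<and> fst (snd (snd x)) = k"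
        using M by (simp add: PMa_def)
      have black: "\<And>b m. b \<in> R \<Longrightarrow> m < N \<Longrightarrow> \<exists>!x. x \<in> M \<and> tgt (fst x) (fst (snd x)) = b \<and> snd (snd (snd x)) = m"
        using M by (simp add: PMa_def)
      define sel where "sel w k = (THE x. x \<in> M \<and> fst x = w \<and> fst (snd (snd x)) = k)" for w k
      have sel: "sel w k \<in> M \<and> fst (sel w k) = w \<and> fst (snd (snd (sel w k))) = k" if "w \<in> R" "k < N" for w k
        unfolding sel_def by (rule theI'[OF white[OF that]])
      have selu: "x = sel (fst x) (fst (snd (snd x)))" if "x \<in> M" for x
      proof -
        have A: "fst x \<in> R" "fst (snd (snd x)) < N" using sub that by auto
        show ?thesis unfolding sel_def
          by (rule sym, rule the1_equality[OF white[OF A]]) (simp add: that)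
      qed
      define t where "t = (\<lambda>w\<in>R. \<lambda>k\<in>{..<N}. fst (snd (sel w k)))"
      define l where "l = (\<lambda>y\<in>R \<times> {..<N}. snd (snd (snd (sel (fst y) (snd y)))))"
      have selform: "sel w k = (w, t w k, k, l (w,k))" if "w \<in> R" "k < N" for w k
      proof -
        have "t w k = fst (snd (sel w k))" "l (w,k) = snd (snd (snd (sel w k)))"
          using that by (simp_all add: t_def l_def)
        then show ?thesis using sel[OF that] by (cases "sel w k") simp
      qed
      have selin: "sel w k \<in> {(w, i, k, l). w \<in> R \<and> i < D \<and> k < N \<and> l < N}" if "w \<in> R" "k < N" for w k
      proof -
        have "sel w k \<in> M" using sel[OF that] by simp
        then show ?thesis by (rule subsetD[OF sub])
      qed
      have tD: "fst (snd (sel w k)) < D" and lN: "snd (snd (snd (sel w k))) < N" if "w \<in> R" "k < N" for w k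
        using selin[OF that] by (cases "sel w k"; auto)+
      have tT: "t \<in> Tset R D N"
        unfolding Tset_def t_def by (simp add: restrict_PiE_iff tD)
      have MPhi: "M = Phi R N (t, l)"
      proof
        show "M \<subseteq> Phi R N (t, l)"
        proof
          fix x assume x: "x \<in> M"
          have "fst x \<in> R" "fst (snd (snd x)) < N" using sub x by auto
          then have "x = (fst x, t (fst x) (fst (snd (snd x))), fst (snd (snd x)), l (fst x, fst (snd (snd x))))"
            using selu[OF x] selform by metis
          then show "x \<in> Phi R N (t, l)" unfolding Phi_def
            using \<open>fst x \<in> R\<close> \<open>fst (snd (snd x)) < N\<close>
            by (intro image_eqI[of _ _ "(fst x, fst (snd (snd x)))"]) auto
        qed
        show "Phi R N (t, l) \<subseteq> M"
        proof
          fix x assume "x \<in> Phi R N (t, l)"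
          then obtain w k where "x = (w, t w k, k, l (w,k))" "w \<in> R" "k < N" unfolding Phi_def by auto
          then show "x \<in> M" using sel selform by metis
        qed
      qed
      have lL: "l \<in> Lset R tgt N t"
      proof -
        have "l \<in> (R \<times> {..<N}) \<rightarrow>\<^sub>E {..<N}"
          unfolding l_def by (simp add: restrict_PiE_iff lN mem_Times_iff)
        moreover have "bij_betw l (Fset R tgt N t b) {..<N}" if b: "b \<in> R" for b
        proof (rule bij_betw_imageI)
          show "inj_on l (Fset R tgt N t b)"
          proof (rule inj_onI)
            fix y y' assume y: "y \<in> Fset R tgt N t b" and y': "y' \<in> Fset R tgt N t b" and eq: "l y = l y'"
            obtain w k where yy: "y = (w,k)" "w \<in> R" "k < N" using y by (auto simp: Fset_def)
            obtain w' k' where yy': "y' = (w',k')" "w' \<in> R" "k' < N" using y' by (auto simp: Fset_def)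
            have ln: "l (w,k) < N" using selin[OF yy(2,3)] selform[OF yy(2,3)] by auto
            have P1: "sel w k \<in> M \<and> tgt (fst (sel w k)) (fst (snd (sel w k))) = b \<and> snd (snd (snd (sel w k))) = l (w,k)"
              using sel[OF yy(2,3)] selform[OF yy(2,3)] y yy by (simp add: Fset_def)
            have P2: "sel w' k' \<in> M \<and> tgt (fst (sel w' k')) (fst (snd (sel w' k'))) = b \<and> snd (snd (snd (sel w' k'))) = l (w,k)"
              using sel[OF yy'(2,3)] selform[OF yy'(2,3)] y' yy' eq yy by (simp add: Fset_def)
            have "sel w k = sel w' k'"
              using ex1_implies_ex black[OF b ln] P1 P2 by blast
            then show "y = y'" using selform[OF yy(2,3)] selform[OF yy'(2,3)] yy yy' by auto
          qed
          show "l ` Fset R tgt N t b = {..<N}"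
          proof
            show "l ` Fset R tgt N t b \<subseteq> {..<N}"
              unfolding Fset_def l_def using lN by auto
            show "{..<N} \<subseteq> l ` Fset R tgt N t b"
            proof
              fix m assume "m \<in> {..<N}"
              then obtain x where x: "x \<in> M" "tgt (fst x) (fst (snd x)) = b" "snd (snd (snd x)) = m"
                using black[OF b] by blast
              obtain w i k mm where xx: "x = (w,i,k,mm)" by (cases x) auto
              have wk: "w \<in> R" "k < N" using sub x xx by auto
              have "x = sel w k" using selu[OF x(1)] xx by simp
              then have "x = (w, t w k, k, l (w,k))" using selform[OF wk] by simp
              then show "m \<in> l ` Fset R tgt N t b" using x xx wk
                by (intro image_eqI[of _ _ "(w,k)"]) (auto simp: Fset_def)
            qed
          qed
        qed
        ultimately show ?thesis by (simp add: Lset_def)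
      qed
      show "M \<in> Phi R N ` Sigma (Tset R D N) (Lset R tgt N)"
        using MPhi tT lL by blast
    qed
  qed
qed



definition Za where "Za R tgt D N (wt :: nat \<Rightarrow> real) = (\<Sum>M\<in>PMa R tgt D N. \<Prod>x\<in>M. wt (fst (snd x)))"

lemma finite_Tset: "finite R \<Longrightarrow> finite (Tset R D N)"
  unfolding Tset_def by (intro finite_PiE) auto

lemma finite_Lset: "finite R \<Longrightarrow> finite (Lset R tgt (N::nat) t)"
proof -
  assume "finite R"
  then have "finite ((R \<times> {..<N}) \<rightarrow>\<^sub>E {..<N})" by (intro finite_PiE finite_cartesian_product) auto
  then show ?thesis unfolding Lset_def by (rule finite_subset[rotated]) auto
qed

lemma Za_eq:
  assumes R: "finite R" and tgtR: "\<And>w i. w \<in> R \<Longrightarrow> i < D \<Longrightarrow> tgt w i \<in> R"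
  shows "Za R tgt D N wt = (\<Sum>t\<in>Tset R D N. (\<Prod>w\<in>R. \<Prod>k<N. wt (t w k)) * real (card (Lset R tgt N t)))"
proof -
  have "Za R tgt D N wt = (\<Sum>p\<in>Sigma (Tset R D N) (Lset R tgt N). \<Prod>x\<in>Phi R N p. wt (fst (snd x)))"
    unfolding Za_def by (rule sum.reindex_bij_betw[OF Phi_bij[OF tgtR], symmetric]) auto
  also have "\<dots> = (\<Sum>p\<in>Sigma (Tset R D N) (Lset R tgt N). \<Prod>w\<in>R. \<Prod>k<N. wt (fst p w k))"
  proof (rule sum.cong[OF refl])
    fix p assume "p \<in> Sigma (Tset R D N) (Lset R tgt N)"
    obtain t l where p: "p = (t, l)" by (cases p)
    have inj: "inj_on (\<lambda>(w,k). (w, t w k, k, l (w,k))) (R \<times> {..<N})"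
      by (rule inj_onI) auto
    have "(\<Prod>x\<in>Phi R N p. wt (fst (snd x))) = (\<Prod>y\<in>R \<times> {..<N}. wt (fst (snd ((\<lambda>(w,k). (w, t w k, k, l (w,k))) y))))"
      unfolding p Phi_def fst_conv snd_conv by (simp only: prod.reindex[OF inj] comp_def)
    also have "\<dots> = (\<Prod>y\<in>R \<times> {..<N}. wt (t (fst y) (snd y)))"
      by (rule prod.cong) auto
    also have "\<dots> = (\<Prod>w\<in>R. \<Prod>k<N. wt (t w k))"
      by (simp add: prod.cartesian_product case_prod_beta)
    finally show "(\<Prod>x\<in>Phi R N p. wt (fst (snd x))) = (\<Prod>w\<in>R. \<Prod>k<N. wt (fst p w k))"
      using p by simp
  qed
  also have "\<dots> = (\<Sum>t\<in>Tset R D N. \<Sum>l\<in>Lset R tgt N t. \<Prod>w\<in>R. \<Prod>k<N. wt (t w k))"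
  proof -
    have "(\<Sum>p\<in>Sigma (Tset R D N) (Lset R tgt N). \<Prod>w\<in>R. \<Prod>k<N. wt (fst p w k))
        = (\<Sum>(t,l)\<in>Sigma (Tset R D N) (Lset R tgt N). \<Prod>w\<in>R. \<Prod>k<N. wt (t w k))"
      by (simp add: case_prod_beta)
    also have "\<dots> = (\<Sum>t\<in>Tset R D N. \<Sum>l\<in>Lset R tgt N t. \<Prod>w\<in>R. \<Prod>k<N. wt (t w k))"
      by (rule sum.Sigma[symmetric]) (use R finite_Tset finite_Lset in auto)
    finally show ?thesis .
  qed
  also have "\<dots> = (\<Sum>t\<in>Tset R D N. (\<Prod>w\<in>R. \<Prod>k<N. wt (t w k)) * real (card (Lset R tgt N t)))"
    by (simp add: mult.commute)
  finally show ?thesis .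
qed

lemma card_Lset:
  assumes R: "finite R" and tgtR: "\<And>w i. w \<in> R \<Longrightarrow> i < D \<Longrightarrow> tgt w i \<in> R"
    and t: "t \<in> Tset R D N"
  shows "card (Lset R tgt N t) = (\<Prod>b\<in>R. card {g \<in> Fset R tgt N t b \<rightarrow>\<^sub>E {..<N}. bij_betw g (Fset R tgt N t b) {..<N}})"
proof -
  have tD: "t w k < D" if "w \<in> R" "k < N" for w k
    using PiE_mem[OF PiE_mem[OF t[unfolded Tset_def] that(1)]] that(2) by simp
  have F: "Fset R tgt N t b = {x \<in> R \<times> {..<N}. (\<lambda>x. tgt (fst x) (t (fst x) (snd x))) x = b}" for b
    unfolding Fset_def by simp
  have pR: "tgt (fst x) (t (fst x) (snd x)) \<in> R" if "x \<in> R \<times> {..<N}" for x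
  proof -
    have "fst x \<in> R" "snd x < N" using that by auto
    then show ?thesis by (intro tgtR tD)
  qed
  show ?thesis unfolding Lset_def F
    by (rule card_fiber_bij) (use R pR in auto)
qed

lemma card_Lset_le:
  assumes R: "finite R" and tgtR: "\<And>w i. w \<in> R \<Longrightarrow> i < D \<Longrightarrow> tgt w i \<in> R"
    and t: "t \<in> Tset R D N"
  shows "card (Lset R tgt N t) \<le> fact N ^ card R"
proof -
  have "card {g \<in> Fset R tgt N t b \<rightarrow>\<^sub>E {..<N}. bij_betw g (Fset R tgt N t b) {..<N}} \<le> fact N" for b
  proof (cases "card (Fset R tgt N t b) = N")
    case True
    have fin: "finite (Fset R tgt N t b)" unfolding Fset_def
      by (rule finite_subset[of _ "R \<times> {..<N}"]) (use R in auto)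
    show ?thesis using card_bij_ext[OF fin, of "{..<N}"] True by simp
  next
    case False
    then have "{g \<in> Fset R tgt N t b \<rightarrow>\<^sub>E {..<N}. bij_betw g (Fset R tgt N t b) {..<N}} = {}"
      using bij_betw_same_card[of _ "Fset R tgt N t b" "{..<N}"] by auto
    then show ?thesis by (simp only: card.empty)
  qed
  then have "(\<Prod>b\<in>R. card {g \<in> Fset R tgt N t b \<rightarrow>\<^sub>E {..<N}. bij_betw g (Fset R tgt N t b) {..<N}}) \<le> (\<Prod>b\<in>R. fact N)"
    by (intro prod_mono) auto
  then show ?thesis using card_Lset[where tgt=tgt, OF R tgtR t] by simp
qed

lemma card_Lset_eq:
  assumes R: "finite R" and tgtR: "\<And>w i. w \<in> R \<Longrightarrow> i < D \<Longrightarrow> tgt w i \<in> R"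
    and t: "t \<in> Tset R D N" and cF: "\<And>b. b \<in> R \<Longrightarrow> card (Fset R tgt N t b) = N"
  shows "card (Lset R tgt N t) = fact N ^ card R"
proof -
  have "card {g \<in> Fset R tgt N t b \<rightarrow>\<^sub>E {..<N}. bij_betw g (Fset R tgt N t b) {..<N}} = fact N" if b: "b \<in> R" for b
  proof -
    have fin: "finite (Fset R tgt N t b)" unfolding Fset_def
      by (rule finite_subset[of _ "R \<times> {..<N}"]) (use R in auto)
    show ?thesis using card_bij_ext[OF fin, of "{..<N}"] cF[OF b] by simp
  qed
  then show ?thesis using card_Lset[where tgt=tgt, OF R tgtR t] by simp
qed

lemma sum_Tset_prod:
  fixes wt :: "nat \<Rightarrow> real"
  assumes R: "finite R"
  shows "(\<Sum>t\<in>Tset R D N. \<Prod>w\<in>R. \<Prod>k<N. wt (t w k)) = ((\<Sum>i<D. wt i) ^ N) ^ card R"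
proof -
  have "(\<Sum>t\<in>Tset R D N. \<Prod>w\<in>R. \<Prod>k<N. wt (t w k)) = (\<Prod>w\<in>R. \<Sum>s\<in>{..<N} \<rightarrow>\<^sub>E {..<D}. \<Prod>k<N. wt (s k))"
    unfolding Tset_def by (rule prod_sum_PiE[of R "\<lambda>_. {..<N} \<rightarrow>\<^sub>E {..<D}" "\<lambda>w s. \<Prod>k<N. wt (s k)", symmetric]) (use R in \<open>auto intro: finite_PiE\<close>)
  also have "\<dots> = (\<Prod>w\<in>R. \<Prod>k<N. \<Sum>i<D. wt i)"
    by (rule prod.cong[OF refl], rule prod_sum_PiE[of "{..<N}" "\<lambda>_. {..<D}" "\<lambda>k i. wt i", symmetric]) auto
  finally show ?thesis by simp
qed

lemma Za_upper:
  assumes R: "finite R" and tgtR: "\<And>w i. w \<in> R \<Longrightarrow> i < D \<Longrightarrow> tgt w i \<in> R"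
    and wt: "\<And>i. wt i \<ge> 0"
  shows "Za R tgt D N wt \<le> fact N ^ card R * ((\<Sum>i<D. wt i) ^ N) ^ card R"
proof -
  have "Za R tgt D N wt = (\<Sum>t\<in>Tset R D N. (\<Prod>w\<in>R. \<Prod>k<N. wt (t w k)) * real (card (Lset R tgt N t)))"
    by (rule Za_eq[OF R tgtR])
  also have "\<dots> \<le> (\<Sum>t\<in>Tset R D N. (\<Prod>w\<in>R. \<Prod>k<N. wt (t w k)) * (fact N ^ card R))"
  proof (rule sum_mono)
    fix t assume t: "t \<in> Tset R D N"
    have "real (card (Lset R tgt N t)) \<le> real (fact N ^ card R)"
      using card_Lset_le[where tgt=tgt, OF R tgtR t] by linarith
    then have "real (card (Lset R tgt N t)) \<le> fact N ^ card R" by simp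
    moreover have "(\<Prod>w\<in>R. \<Prod>k<N. wt (t w k)) \<ge> 0" by (intro prod_nonneg) (auto intro: wt)
    ultimately show "(\<Prod>w\<in>R. \<Prod>k<N. wt (t w k)) * real (card (Lset R tgt N t)) \<le> (\<Prod>w\<in>R. \<Prod>k<N. wt (t w k)) * (fact N ^ card R)"
      by (intro mult_left_mono) auto
  qed
  also have "\<dots> = fact N ^ card R * ((\<Sum>i<D. wt i) ^ N) ^ card R"
    by (simp add: sum_distrib_left[symmetric] sum_Tset_prod[OF R] mult.commute)
  finally show ?thesis .
qed


definition cnt :: "nat \<Rightarrow> nat \<Rightarrow> (nat \<Rightarrow> nat) \<Rightarrow> nat \<Rightarrow> nat" where
  "cnt D N s = (\<lambda>i\<in>{..<D}. card {k\<in>{..<N}. s k = i})"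
definition Cset :: "nat \<Rightarrow> nat \<Rightarrow> (nat \<Rightarrow> nat) \<Rightarrow> (nat \<Rightarrow> nat) set" where
  "Cset D N a = {s \<in> {..<N} \<rightarrow>\<^sub>E {..<D}. cnt D N s = a}"

lemma sum_cnt:
  fixes s :: "nat \<Rightarrow> nat" and D N :: nat
  assumes s: "s \<in> {..<N} \<rightarrow>\<^sub>E {..<D}"
  shows "(\<Sum>i<D. card {k\<in>{..<N}. s k = i}) = N"
proof -
  have img: "s ` {..<N} \<subseteq> {..<D}" using PiE_mem[OF s] by auto
  have "(\<Sum>i\<in>{..<D}. \<Sum>k\<in>{x \<in> {..<N}. s x = i}. (1::nat)) = (\<Sum>k\<in>{..<N}. (1::nat))"
    by (rule sum.group[of "{..<N}" "{..<D}" s]) (simp_all add: img)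
  then show ?thesis by (simp only: card_eq_sum[symmetric]) simp
qed

lemma card_Fset_N:
  assumes R: "finite R"
    and srcR: "\<And>b i. b \<in> R \<Longrightarrow> i < D \<Longrightarrow> src i b \<in> R"
    and srceq: "\<And>w i b. w \<in> R \<Longrightarrow> b \<in> R \<Longrightarrow> i < D \<Longrightarrow> (tgt w i = b) = (w = src i b)"
    and t: "t \<in> Tset R D N" and ta: "\<And>w. w \<in> R \<Longrightarrow> t w \<in> Cset D N a"
    and b: "b \<in> R"
  shows "card (Fset R tgt N t b) = N"
proof -
  have tD: "t w k < D" if "w \<in> R" "k < N" for w k
    using PiE_mem[OF PiE_mem[OF t[unfolded Tset_def] that(1)]] that(2) by simp
  let ?S = "SIGMA i:{..<D}. {k\<in>{..<N}. t (src i b) k = i}"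
  let ?h = "\<lambda>(i,k). (src i b, k)"
  have eq: "Fset R tgt N t b = ?h ` ?S"
  proof
    show "Fset R tgt N t b \<subseteq> ?h ` ?S"
    proof
      fix x assume x: "x \<in> Fset R tgt N t b"
      obtain w k where xx: "x = (w,k)" by (cases x)
      have w: "w \<in> R" and k: "k < N" and tg: "tgt w (t w k) = b" using x xx by (auto simp: Fset_def)
      have i: "t w k < D" using tD[OF w k] .
      have ws: "w = src (t w k) b" using srceq[OF w b i] tg by simp
      show "x \<in> ?h ` ?S"
        by (rule image_eqI[of _ _ "(t w k, k)"]) (use xx ws i k in \<open>auto\<close>)
    qed
    show "?h ` ?S \<subseteq> Fset R tgt N t b"
    proof
      fix x assume "x \<in> ?h ` ?S"
      then obtain i k where ik: "i < D" "k < N" "t (src i b) k = i" "x = (src i b, k)" by auto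
      have "src i b \<in> R" using srcR[OF b ik(1)] .
      moreover have "tgt (src i b) i = b" using srceq[OF \<open>src i b \<in> R\<close> b ik(1)] by simp
      ultimately show "x \<in> Fset R tgt N t b" using ik by (simp add: Fset_def)
    qed
  qed
  have inj: "inj_on ?h ?S"
  proof (rule inj_onI)
    fix x y assume x: "x \<in> ?S" and y: "y \<in> ?S" and h: "?h x = ?h y"
    obtain i k where xx: "x = (i,k)" by (cases x)
    obtain i' k' where yy: "y = (i',k')" by (cases y)
    have 1: "t (src i b) k = i" using x xx by simp
    have 2: "t (src i' b) k' = i'" using y yy by simp
    have 3: "src i b = src i' b" "k = k'" using h xx yy by simp_all
    have "i = i'" using 1 2 3 by metis
    then show "x = y" using 3 xx yy by simp
  qed
  have "card (Fset R tgt N t b) = card ?S" unfolding eq by (rule card_image[OF inj])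
  also have "\<dots> = (\<Sum>i<D. card {k\<in>{..<N}. t (src i b) k = i})"
    by (rule card_SigmaI) auto
  also have "\<dots> = (\<Sum>i<D. card {k\<in>{..<N}. t b k = i})"
  proof (rule sum.cong[OF refl])
    fix i assume i: "i \<in> {..<D}"
    have iD: "i < D" using i by simp
    have "t (src i b) \<in> Cset D N a" "t b \<in> Cset D N a" using ta[OF srcR[OF b iD]] ta[OF b] by blast+
    then have "cnt D N (t (src i b)) = a" "cnt D N (t b) = a" unfolding Cset_def by blast+
    then have "cnt D N (t (src i b)) i = cnt D N (t b) i" by simp
    then show "card {k\<in>{..<N}. t (src i b) k = i} = card {k\<in>{..<N}. t b k = i}"
      using i by (simp add: cnt_def)
  qed
  also have "\<dots> = N"
    by (rule sum_cnt) (use ta[OF b] in \<open>simp add: Cset_def\<close>)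
  finally show ?thesis .
qed

lemma Za_lower_a:
  assumes R: "finite R" and tgtR: "\<And>w i. w \<in> R \<Longrightarrow> i < D \<Longrightarrow> tgt w i \<in> R"
    and srcR: "\<And>b i. b \<in> R \<Longrightarrow> i < D \<Longrightarrow> src i b \<in> R"
    and srceq: "\<And>w i b. w \<in> R \<Longrightarrow> b \<in> R \<Longrightarrow> i < D \<Longrightarrow> (tgt w i = b) = (w = src i b)"
    and wt: "\<And>i. wt i \<ge> 0"
  shows "fact N ^ card R * (\<Sum>s\<in>Cset D N a. \<Prod>k<N. wt (s k)) ^ card R \<le> Za R tgt D N wt"
proof -
  let ?Ta = "R \<rightarrow>\<^sub>E Cset D N a"
  have sub: "?Ta \<subseteq> Tset R D N" unfolding Tset_def Cset_def PiE_iff[of _ R] by blast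
  have "fact N ^ card R * (\<Sum>s\<in>Cset D N a. \<Prod>k<N. wt (s k)) ^ card R
      = fact N ^ card R * (\<Prod>w\<in>R. \<Sum>s\<in>Cset D N a. \<Prod>k<N. wt (s k))" by simp
  also have "\<dots> = fact N ^ card R * (\<Sum>t\<in>?Ta. \<Prod>w\<in>R. \<Prod>k<N. wt (t w k))"
  proof -
    have fC: "finite (Cset D N a)" unfolding Cset_def by (rule finite_subset[of _ "{..<N} \<rightarrow>\<^sub>E {..<D}"]) (auto intro: finite_PiE)
    show ?thesis
      by (subst prod_sum_PiE[of R "\<lambda>_. Cset D N a" "\<lambda>w s. \<Prod>k<N. wt (s k)"]) (use R fC in auto)
  qed
  also have "\<dots> = (\<Sum>t\<in>?Ta. (\<Prod>w\<in>R. \<Prod>k<N. wt (t w k)) * real (card (Lset R tgt N t)))"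
  proof -
    have "card (Lset R tgt N t) = fact N ^ card R" if t: "t \<in> ?Ta" for t
    proof (rule card_Lset_eq[where tgt=tgt, OF R tgtR])
      show tT: "t \<in> Tset R D N" using t sub by blast
      fix b assume "b \<in> R"
      show "card (Fset R tgt N t b) = N"
        by (rule card_Fset_N[where src=src and a=a, OF R srcR srceq tT _ \<open>b \<in> R\<close>]) (use t in auto)
    qed
    then show ?thesis by (simp add: sum_distrib_left mult.commute)
  qed
  also have "\<dots> \<le> (\<Sum>t\<in>Tset R D N. (\<Prod>w\<in>R. \<Prod>k<N. wt (t w k)) * real (card (Lset R tgt N t)))"
    by (rule sum_mono2[OF finite_Tset[OF R] sub]) (auto intro!: mult_nonneg_nonneg prod_nonneg wt)
  also have "\<dots> = Za R tgt D N wt" by (rule Za_eq[where tgt=tgt, OF R tgtR, symmetric])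
  finally show ?thesis .
qed

lemma exists_good_a:
  fixes wt :: "nat \<Rightarrow> real"
  assumes wt: "\<And>i. wt i \<ge> 0"
  shows "\<exists>a. (\<Sum>i<D. wt i) ^ N / real ((N+1) ^ D) \<le> (\<Sum>s\<in>Cset D N a. \<Prod>k<N. wt (s k))"
proof (rule ccontr)
  assume "\<not> ?thesis"
  then have lt: "(\<Sum>s\<in>Cset D N a. \<Prod>k<N. wt (s k)) < (\<Sum>i<D. wt i) ^ N / real ((N+1) ^ D)" for a
    by (simp add: not_le)
  let ?A = "{..<D} \<rightarrow>\<^sub>E {..N}"
  let ?S0 = "{..<N} \<rightarrow>\<^sub>E {..<D}"
  have cA: "card ?A = (N+1) ^ D" by (simp add: card_PiE)
  have fA: "finite ?A" by (auto intro: finite_PiE)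
  have neA: "?A \<noteq> {}" using cA by auto
  have img: "cnt D N ` ?S0 \<subseteq> ?A"
  proof
    fix x assume "x \<in> cnt D N ` ?S0"
    then obtain s where "x = cnt D N s" by auto
    moreover have "card {k\<in>{..<N}. s k = i} \<le> N" for i
      using card_mono[of "{..<N}" "{k\<in>{..<N}. s k = i}"] by auto
    ultimately show "x \<in> ?A" by (auto simp: cnt_def)
  qed
  have "(\<Sum>i<D. wt i) ^ N = (\<Prod>k<N. \<Sum>i<D. wt i)" by simp
  also have "\<dots> = (\<Sum>s\<in>?S0. \<Prod>k<N. wt (s k))"
    by (rule prod_sum_PiE[of "{..<N}" "\<lambda>_. {..<D}" "\<lambda>k i. wt i"]) auto
  also have "\<dots> = (\<Sum>a\<in>?A. \<Sum>s\<in>{x \<in> ?S0. cnt D N x = a}. \<Prod>k<N. wt (s k))"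
    by (rule sum.group[symmetric]) (use img in \<open>auto intro: finite_PiE\<close>)
  also have "\<dots> = (\<Sum>a\<in>?A. \<Sum>s\<in>Cset D N a. \<Prod>k<N. wt (s k))"
    by (simp add: Cset_def)
  also have "\<dots> < (\<Sum>a\<in>?A. (\<Sum>i<D. wt i) ^ N / real ((N+1) ^ D))"
    by (rule sum_strict_mono[OF fA neA]) (rule lt)
  also have "\<dots> = (\<Sum>i<D. wt i) ^ N" using cA by simp
  finally show False by simp
qed

lemma Za_bounds:
  assumes R: "finite R" and tgtR: "\<And>w i. w \<in> R \<Longrightarrow> i < D \<Longrightarrow> tgt w i \<in> R"
    and srcR: "\<And>b i. b \<in> R \<Longrightarrow> i < D \<Longrightarrow> src i b \<in> R"
    and srceq: "\<And>w i b. w \<in> R \<Longrightarrow> b \<in> R \<Longrightarrow> i < D \<Longrightarrow> (tgt w i = b) = (w = src i b)"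
    and wt: "\<And>i. wt i \<ge> 0"
  shows "fact N ^ card R * ((\<Sum>i<D. wt i) ^ N / real ((N+1) ^ D)) ^ card R \<le> Za R tgt D N wt"
    and "Za R tgt D N wt \<le> fact N ^ card R * ((\<Sum>i<D. wt i) ^ N) ^ card R"
proof -
  obtain a where a: "(\<Sum>i<D. wt i) ^ N / real ((N+1) ^ D) \<le> (\<Sum>s\<in>Cset D N a. \<Prod>k<N. wt (s k))"
    using exists_good_a[of wt D N] wt by blast
  have W: "(\<Sum>i<D. wt i) \<ge> 0" by (intro sum_nonneg wt)
  have "((\<Sum>i<D. wt i) ^ N / real ((N+1) ^ D)) ^ card R \<le> (\<Sum>s\<in>Cset D N a. \<Prod>k<N. wt (s k)) ^ card R"
    by (rule power_mono[OF a]) (use W in simp)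
  then have "fact N ^ card R * ((\<Sum>i<D. wt i) ^ N / real ((N+1) ^ D)) ^ card R
      \<le> fact N ^ card R * (\<Sum>s\<in>Cset D N a. \<Prod>k<N. wt (s k)) ^ card R"
    by (rule mult_left_mono) simp
  also have "\<dots> \<le> Za R tgt D N wt"
    by (rule Za_lower_a[where tgt=tgt and src=src, OF R tgtR srcR srceq wt])
  finally show "fact N ^ card R * ((\<Sum>i<D. wt i) ^ N / real ((N+1) ^ D)) ^ card R \<le> Za R tgt D N wt" .
  show "Za R tgt D N wt \<le> fact N ^ card R * ((\<Sum>i<D. wt i) ^ N) ^ card R"
    by (rule Za_upper[where tgt=tgt, OF R tgtR wt])
qed

lemma PM_eq: "perfect_matchings D e v0 n N = PMa (torus_reps n) (torus_target n e v0) D N"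
  unfolding perfect_matchings_def PMa_def blowup_edges_def by simp

lemma Z_eq: "Z_part D e v0 wt n N = Za (torus_reps n) (torus_target n e v0) D N wt"
  unfolding Z_part_def Za_def PM_eq by simp

lemma torus_reps_eq: "torus_reps n = vec_lambda ` (UNIV \<rightarrow>\<^sub>E {0..<int n})"
proof
  show "torus_reps n \<subseteq> vec_lambda ` (UNIV \<rightarrow>\<^sub>E {0..<int n})"
  proof
    fix w :: "int^'d" assume w: "w \<in> torus_reps n"
    have "vec_nth w \<in> UNIV \<rightarrow>\<^sub>E {0..<int n}" using w by (auto simp: torus_reps_def)
    then show "w \<in> vec_lambda ` (UNIV \<rightarrow>\<^sub>E {0..<int n})"
      by (intro image_eqI[of _ _ "vec_nth w"]) simp_all
  qed
  show "vec_lambda ` (UNIV \<rightarrow>\<^sub>E {0..<int n}) \<subseteq> (torus_reps n :: (int^'d) set)"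
    by (auto simp: torus_reps_def)
qed

lemma finite_card_torus_reps:
  shows "finite (torus_reps n :: (int^'d) set)" and "card (torus_reps n :: (int^'d) set) = n ^ CARD('d)"
proof -
  have inj: "inj_on (vec_lambda :: ('d \<Rightarrow> int) \<Rightarrow> int^'d) (UNIV \<rightarrow>\<^sub>E {0..<int n})"
    by (rule inj_onI) (simp add: vec_lambda_inject)
  have fin: "finite (UNIV \<rightarrow>\<^sub>E {0..<int n} :: ('d \<Rightarrow> int) set)" by (intro finite_PiE) auto
  show "finite (torus_reps n :: (int^'d) set)" unfolding torus_reps_eq using fin by simp
  have "card (torus_reps n :: (int^'d) set) = card (UNIV \<rightarrow>\<^sub>E {0..<int n} :: ('d \<Rightarrow> int) set)"
    unfolding torus_reps_eq by (rule card_image[OF inj])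
  also have "\<dots> = n ^ CARD('d)" by (simp add: card_PiE)
  finally show "card (torus_reps n :: (int^'d) set) = n ^ CARD('d)" .
qed

lemma mod_shift_iff:
  fixes w b c m :: int
  assumes "0 \<le> w" "w < m" "0 \<le> b" "b < m"
  shows "((w + c) mod m = b) = (w = (b - c) mod m)"
proof -
  have wm: "w mod m = w" and bm: "b mod m = b" using assms by simp_all
  have "((w + c) mod m = b) = ((w + c) mod m = b mod m)" using bm by simp
  also have "\<dots> = (m dvd (w + c) - b)" by (rule mod_eq_dvd_iff)
  also have "\<dots> = (m dvd w - (b - c))" by (simp add: algebra_simps)
  also have "\<dots> = (w mod m = (b - c) mod m)" by (rule mod_eq_dvd_iff[symmetric])
  also have "\<dots> = (w = (b - c) mod m)" using wm by simp
  finally show ?thesis .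
qed

definition torus_src :: "nat \<Rightarrow> (nat \<Rightarrow> real^'d) \<Rightarrow> real^'d \<Rightarrow> nat \<Rightarrow> int^'d \<Rightarrow> int^'d" where
  "torus_src n e v0 i b = (\<chi> k. (b $ k - \<lfloor>(e i - v0) $ k\<rfloor>) mod int n)"

lemma tgt_in: "n \<ge> 1 \<Longrightarrow> torus_target n e v0 w i \<in> torus_reps n"
  by (simp add: torus_target_def torus_reps_def)

lemma src_in: "n \<ge> 1 \<Longrightarrow> torus_src n e v0 i b \<in> torus_reps n"
  by (simp add: torus_src_def torus_reps_def)

lemma src_eq:
  assumes "w \<in> torus_reps n" "b \<in> torus_reps n"
  shows "(torus_target n e v0 w i = b) = (w = torus_src n e v0 i b)"
proof -
  have "(torus_target n e v0 w i = b) = (\<forall>k. (w $ k + \<lfloor>(e i - v0) $ k\<rfloor>) mod int n = b $ k)"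
    by (simp add: torus_target_def vec_eq_iff)
  also have "\<dots> = (\<forall>k. w $ k = (b $ k - \<lfloor>(e i - v0) $ k\<rfloor>) mod int n)"
  proof (intro all_cong1)
    fix k
    show "((w $ k + \<lfloor>(e i - v0) $ k\<rfloor>) mod int n = b $ k) = (w $ k = (b $ k - \<lfloor>(e i - v0) $ k\<rfloor>) mod int n)"
      by (rule mod_shift_iff) (use assms in \<open>auto simp: torus_reps_def\<close>)
  qed
  also have "\<dots> = (w = torus_src n e v0 i b)" by (simp add: torus_src_def vec_eq_iff)
  finally show ?thesis .
qed

lemma Za_cong_wt:
  assumes "\<And>i. i < D \<Longrightarrow> wt i = wt' i"
  shows "Za R tgt D N wt = Za R tgt D N wt'"
  unfolding Za_def
proof (rule sum.cong[OF refl], rule prod.cong[OF refl])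
  fix M x assume "M \<in> PMa R tgt D N" "x \<in> M"
  then have "x \<in> {(w, i, k, l). w \<in> R \<and> i < D \<and> k < N \<and> l < N}" unfolding PMa_def by blast
  then have "fst (snd x) < D" by (cases x) auto
  then show "wt (fst (snd x)) = wt' (fst (snd x))" by (rule assms)
qed

theorem mainTheorem1:
  fixes D :: nat and e :: "nat \<Rightarrow> real^'d" and v0 :: "real^'d" and wt :: "nat \<Rightarrow> real"
  assumes "span (e ` {..<D}) = UNIV"
    and "(\<Sum>i<D. e i) = 0"
    and "\<forall>i<D. e i - v0 \<in> Zd"
    and "inj_on e {..<D}"
    and "lattice_connected D e v0"
    and "\<forall>i<D. wt i > 0"
  shows "\<exists>L :: nat \<Rightarrow> real.
           (\<forall>n\<ge>1. (\<lambda>N. ln (Z_part D e v0 wt n N / fact N ^ (n ^ CARD('d)))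
                          / (real N * real n ^ CARD('d))) \<longlonglongrightarrow> L n)
           \<and> L \<longlonglongrightarrow> ln (\<Sum>i<D. wt i)"
proof -
  have D0: "D > 0"
  proof (rule ccontr)
    assume "\<not> D > 0"
    then have "D = 0" by simp
    then have "span (e ` {..<D}) = {0}" by simp
    with assms(1) have U: "(UNIV :: (real^'d) set) = {0}" by simp
    have "(axis undefined 1 :: real^'d) \<noteq> 0" by (simp add: axis_eq_0_iff)
    moreover have "(axis undefined 1 :: real^'d) \<in> UNIV" by simp
    ultimately show False using U by blast
  qed
  define W where "W = (\<Sum>i<D. wt i)"
  have Wpos: "W > 0" unfolding W_def using assms(6) D0 by (intro sum_pos) auto
  define wt' where "wt' i = (if i < D then wt i else 1)" for i
  have wt'nn: "wt' i \<ge> 0" for i using assms(6) by (auto simp: wt'_def less_imp_le)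
  have W': "(\<Sum>i<D. wt' i) = W" unfolding W_def wt'_def by simp
  show ?thesis
  proof (intro exI[of _ "\<lambda>_. ln W"] conjI allI impI)
    show "(\<lambda>_. ln W) \<longlonglongrightarrow> ln (\<Sum>i<D. wt i)" unfolding W_def by simp
    fix n :: nat assume n: "n \<ge> 1"
    define m where "m = n ^ CARD('d)"
    have m1: "m \<ge> 1" unfolding m_def using n by simp
    have fR: "finite (torus_reps n :: (int^'d) set)" and cR: "card (torus_reps n :: (int^'d) set) = m"
      using finite_card_torus_reps[where 'd='d, of n] unfolding m_def by simp_all
    have tgtR: "\<And>w i. w \<in> torus_reps n \<Longrightarrow> i < D \<Longrightarrow> torus_target n e v0 w i \<in> torus_reps n"
      using tgt_in[OF n] by blast
    have srcR: "\<And>b i. b \<in> torus_reps n \<Longrightarrow> i < D \<Longrightarrow> torus_src n e v0 i b \<in> torus_reps n"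
      using src_in[OF n] by blast
    have srceq: "\<And>w i b. w \<in> torus_reps n \<Longrightarrow> b \<in> torus_reps n \<Longrightarrow> i < D \<Longrightarrow>
        (torus_target n e v0 w i = b) = (w = torus_src n e v0 i b)"
      using src_eq by blast
    have Zw: "Z_part D e v0 wt n N = Za (torus_reps n) (torus_target n e v0) D N wt'" for N
      unfolding Z_eq by (rule Za_cong_wt) (simp add: wt'_def)
    have lowB: "fact N ^ m * (W ^ N / real ((N+1) ^ D)) ^ m \<le> Z_part D e v0 wt n N" for N
      using Za_bounds(1)[where R="torus_reps n" and tgt="torus_target n e v0" and src="torus_src n e v0"
          and wt=wt' and D=D and N=N, OF fR tgtR srcR srceq wt'nn] cR W' Zw by simp
    have upB: "Z_part D e v0 wt n N \<le> fact N ^ m * (W ^ N) ^ m" for N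
      using Za_bounds(2)[where R="torus_reps n" and tgt="torus_target n e v0" and src="torus_src n e v0"
          and wt=wt' and D=D and N=N, OF fR tgtR srcR srceq wt'nn] cR W' Zw by simp
    define f where "f N = ln (Z_part D e v0 wt n N / fact N ^ (n ^ CARD('d))) / (real N * real n ^ CARD('d))" for N
    have fm: "f N = ln (Z_part D e v0 wt n N / fact N ^ m) / (real N * real m)" for N
      unfolding f_def m_def by simp
    have bnds: "ln W - real D * ln (real N + 1) / real N \<le> f N \<and> f N \<le> ln W" if N: "N \<ge> 1" for N
    proof -
      define X where "X = Z_part D e v0 wt n N / fact N ^ m"
      have fpos: "(fact N :: real) ^ m > 0" by simp
      have lo: "(W ^ N / real ((N+1) ^ D)) ^ m \<le> X"
        unfolding X_def using lowB[of N] fpos by (simp add: field_simps)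
      have up: "X \<le> (W ^ N) ^ m"
        unfolding X_def using upB[of N] fpos by (simp add: field_simps)
      have lopos: "(W ^ N / real ((N+1) ^ D)) ^ m > 0" using Wpos by simp
      have Xpos: "X > 0" using lo lopos by linarith
      have "ln ((W ^ N / real ((N+1) ^ D)) ^ m) \<le> ln X" using lo lopos Xpos by simp
      moreover have "ln ((W ^ N / real ((N+1) ^ D)) ^ m) = real m * (real N * ln W - real D * ln (real N + 1))"
        using Wpos by (simp add: ln_realpow ln_div)
      moreover have "ln X \<le> ln ((W ^ N) ^ m)" using up Xpos by simp
      moreover have "ln ((W ^ N) ^ m) = real m * (real N * ln W)"
        using Wpos by (simp add: ln_realpow)
      ultimately have A: "real m * (real N * ln W - real D * ln (real N + 1)) \<le> ln X"
        and B: "ln X \<le> real m * (real N * ln W)" by linarith+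
      have Nm: "real N * real m > 0" using N m1 by simp
      have fX: "f N = ln X / (real N * real m)" unfolding fm X_def by simp
      have Np: "real N > 0" and mp: "real m > 0" using N m1 by simp_all
      have "ln W - real D * ln (real N + 1) / real N = (real m * (real N * ln W - real D * ln (real N + 1))) / (real N * real m)"
        using Np mp by (simp add: field_simps)
      also have "\<dots> \<le> f N" unfolding fX using A Nm by (intro divide_right_mono) auto
      finally have 1: "ln W - real D * ln (real N + 1) / real N \<le> f N" .
      have "f N \<le> (real m * (real N * ln W)) / (real N * real m)" unfolding fX using B Nm by (intro divide_right_mono) auto
      also have "\<dots> = ln W" using Np mp by (simp add: field_simps)
      finally show ?thesis using 1 by simp
    qed
    have lim0: "(\<lambda>N. real D * ln (real N + 1) / real N) \<longlonglongrightarrow> 0" by real_asymp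
    have limlo: "(\<lambda>N. ln W - real D * ln (real N + 1) / real N) \<longlonglongrightarrow> ln W"
      using tendsto_diff[OF tendsto_const[of "ln W"] lim0] by simp
    have "f \<longlonglongrightarrow> ln W"
    proof (rule tendsto_sandwich[OF _ _ limlo tendsto_const])
      show "\<forall>\<^sub>F N in sequentially. ln W - real D * ln (real N + 1) / real N \<le> f N"
        using bnds eventually_sequentially by blast
      show "\<forall>\<^sub>F N in sequentially. f N \<le> ln W"
        using bnds eventually_sequentially by blast
    qed
    then show "(\<lambda>N. ln (Z_part D e v0 wt n N / fact N ^ (n ^ CARD('d))) / (real N * real n ^ CARD('d))) \<longlonglongrightarrow> ln W"
      unfolding f_def by simp
  qed
qed

end
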